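(* Let $n\ge 2$, let $2\le k\le n$, and let $\alpha_k,\alpha_{k+1},\ldots,\alpha_n\in\mathbb{C}$. Let $\mathbf{A}$ and $\mathbf{B}$ be two cyclic Leibniz algebras over $\mathbb{C}$ of dimension $n$. Assume $\mathbf{A}$ has a cyclic generator $a$ satisfying $$aa^n=\alpha_k a^k+\alpha_{k+1}a^{k+1}+\cdots+\alpha_n a^n.$$ Then $\mathbf{A}$ is isomorphic to $\mathbf{B}$ (as algebras) if and only if $\mathbf{B}$ has a cyclic generator $b$ satisfying $$bb^n=\alpha_k b^k+\alpha_{k+1}b^{k+1}+\cdots+\alpha_n b^n.$$
   Context: A (left) Leibniz algebra is a vector space with a bilinear product such that left multiplication by every element is a derivation: $x(yz)=(xy)z+y(xz)$ for all $x,y,z$. A cyclic Leibniz algebra is a Leibniz algebra generated (as an algebra) by a single element. For an element $x$ one sets $x^1=x$ and $x^{j+1}=x\,x^j$ (left multiplication by $x$ applied $j$ times to $x$). An element $x$ of an $n$-dimensional cyclic Leibniz algebra is called a cyclic generator (or generator) if $\{x,x^2,\ldots,x^n\}$ is a basis of the algebra. *)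

theory Defs
  imports Complex_Main
begin

definition leibniz_algebra :: "(complex \<Rightarrow> 'a::ab_group_add \<Rightarrow> 'a) \<Rightarrow> ('a \<Rightarrow> 'a \<Rightarrow> 'a) \<Rightarrow> bool" where
  "leibniz_algebra sc m \<longleftrightarrow>
     vector_space sc \<and>
     (\<forall>x. Vector_Spaces.linear sc sc (m x)) \<and>
     (\<forall>y. Vector_Spaces.linear sc sc (\<lambda>x. m x y)) \<and>
     (\<forall>x y z. m x (m y z) = m (m x y) z + m y (m x z))"

definition cyclic_algebra :: "(complex \<Rightarrow> 'a::ab_group_add \<Rightarrow> 'a) \<Rightarrow> ('a \<Rightarrow> 'a \<Rightarrow> 'a) \<Rightarrow> bool" where
  "cyclic_algebra sc m \<longleftrightarrow>
     (\<exists>x. \<forall>S. module.subspace sc S \<and> (\<forall>u\<in>S. \<forall>v\<in>S. m u v \<in> S) \<and> x \<in> S \<longrightarrow> S = UNIV)"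

text \<open>lpow m x j = x^(j+1) in the paper's notation: x^1 = x, x^(j+1) = x x^j.\<close>
primrec lpow :: "('a \<Rightarrow> 'a \<Rightarrow> 'a) \<Rightarrow> 'a \<Rightarrow> nat \<Rightarrow> 'a" where
  "lpow m x 0 = x"
| "lpow m x (Suc j) = m x (lpow m x j)"

definition cyclic_generator :: "(complex \<Rightarrow> 'a::ab_group_add \<Rightarrow> 'a) \<Rightarrow> ('a \<Rightarrow> 'a \<Rightarrow> 'a) \<Rightarrow> nat \<Rightarrow> 'a \<Rightarrow> bool" where
  "cyclic_generator sc m n x \<longleftrightarrow>
     inj_on (lpow m x) {..<n} \<and>
     \<not> module.dependent sc (lpow m x ` {..<n}) \<and>
     module.span sc (lpow m x ` {..<n}) = UNIV"

definition algebra_iso :: "(complex \<Rightarrow> 'a::ab_group_add \<Rightarrow> 'a) \<Rightarrow> ('a \<Rightarrow> 'a \<Rightarrow> 'a) \<Rightarrow>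
    (complex \<Rightarrow> 'b::ab_group_add \<Rightarrow> 'b) \<Rightarrow> ('b \<Rightarrow> 'b \<Rightarrow> 'b) \<Rightarrow> bool" where
  "algebra_iso scA mA scB mB \<longleftrightarrow>
     (\<exists>f. bij f \<and> Vector_Spaces.linear scA scB f \<and> (\<forall>x y. f (mA x y) = mB (f x) (f y)))"

end

theory Submission
  imports Defs
begin

lemma leib_zero_left:
  assumes "leibniz_algebra sc m"
  shows "m (lpow m x (Suc j)) z = 0"
proof -
  have lin: "\<And>x. Vector_Spaces.linear sc sc (m x)"
    and id: "\<And>x y z. m x (m y z) = m (m x y) z + m y (m x z)"
    using assms unfolding leibniz_algebra_def by blast+
  have m0: "\<And>x. m x 0 = 0"
  proof -
    fix x
    interpret Vector_Spaces.linear sc sc "m x" by (rule lin)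
    show "m x 0 = 0" by (rule zero)
  qed
  have idm: "\<And>x y z. m (m x y) z = m x (m y z) - m y (m x z)"
  proof -
    fix x y z show "m (m x y) z = m x (m y z) - m y (m x z)"
      using id[of x y z] by (simp add: eq_diff_eq)
  qed
  show ?thesis
  proof (induction j arbitrary: z)
    case 0
    show ?case using idm[of x x z] by simp
  next
    case (Suc j)
    have "m (lpow m x (Suc (Suc j))) z = m x (m (lpow m x (Suc j)) z) - m (lpow m x (Suc j)) (m x z)"
      using idm[of x "lpow m x (Suc j)" z] by simp
    then show ?case using Suc.IH m0 by simp
  qed
qed

lemma lpow_hom:
  assumes "\<And>x y. f (mA x y) = mB (f x) (f y)"
  shows "lpow mB (f a) j = f (lpow mA a j)"
  by (induction j) (simp_all add: assms)

theorem lemma3p1: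
  fixes scA :: "complex \<Rightarrow> 'a::ab_group_add \<Rightarrow> 'a" and mA :: "'a \<Rightarrow> 'a \<Rightarrow> 'a"
    and scB :: "complex \<Rightarrow> 'b::ab_group_add \<Rightarrow> 'b" and mB :: "'b \<Rightarrow> 'b \<Rightarrow> 'b"
    and n k :: nat and \<alpha> :: "nat \<Rightarrow> complex" and a :: 'a
  assumes "n \<ge> 2" and "2 \<le> k" and "k \<le> n"
    and "leibniz_algebra scA mA" and "cyclic_algebra scA mA" and "vector_space.dim scA UNIV = n"
    and "leibniz_algebra scB mB" and "cyclic_algebra scB mB" and "vector_space.dim scB UNIV = n"
    and "cyclic_generator scA mA n a"
    and "mA a (lpow mA a (n - 1)) = (\<Sum>i = k..n. scA (\<alpha> i) (lpow mA a (i - 1)))"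
  shows "algebra_iso scA mA scB mB \<longleftrightarrow>
    (\<exists>b. cyclic_generator scB mB n b \<and>
         mB b (lpow mB b (n - 1)) = (\<Sum>i = k..n. scB (\<alpha> i) (lpow mB b (i - 1))))"
proof -
  have vsA: "vector_space scA" and linA: "\<And>x. Vector_Spaces.linear scA scA (mA x)"
    and linA': "\<And>y. Vector_Spaces.linear scA scA (\<lambda>x. mA x y)"
    using assms(4) unfolding leibniz_algebra_def by blast+
  have vsB: "vector_space scB" and linB: "\<And>x. Vector_Spaces.linear scB scB (mB x)"
    and linB': "\<And>y. Vector_Spaces.linear scB scB (\<lambda>x. mB x y)"
    using assms(7) unfolding leibniz_algebra_def by blast+
  interpret P: vector_space_pair scA scB using vsA vsB by (simp add: vector_space_pair_def)
  interpret Q: vector_space_pair scB scA using vsA vsB by (simp add: vector_space_pair_def)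
  interpret AA: vector_space_pair scA scA using vsA by (simp add: vector_space_pair_def)
  interpret BB: vector_space_pair scB scB using vsB by (simp add: vector_space_pair_def)
  have ga: "inj_on (lpow mA a) {..<n}" "\<not> P.vs1.dependent (lpow mA a ` {..<n})"
      "P.vs1.span (lpow mA a ` {..<n}) = UNIV"
    using assms(10) unfolding cyclic_generator_def by auto
  show ?thesis
  proof
    assume "algebra_iso scA mA scB mB"
    then obtain f where f: "bij f" "Vector_Spaces.linear scA scB f"
      "\<And>x y. f (mA x y) = mB (f x) (f y)" unfolding algebra_iso_def by blast
    have lp: "\<And>j. lpow mB (f a) j = f (lpow mA a j)" by (rule lpow_hom) (rule f(3))
    have im: "lpow mB (f a) ` {..<n} = f ` (lpow mA a ` {..<n})"
      by (auto simp: lp image_image)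
    have "cyclic_generator scB mB n (f a)"
      unfolding cyclic_generator_def
    proof (intro conjI)
      show "inj_on (lpow mB (f a)) {..<n}"
        using ga(1) f(1) unfolding inj_on_def lp by (metis bij_def injD)
      show "\<not> P.vs2.dependent (lpow mB (f a) ` {..<n})"
        unfolding im using P.linear_independent_injective_image[OF f(2) ga(2)] f(1)
        by (metis bij_def inj_on_subset subset_UNIV)
      show "P.vs2.span (lpow mB (f a) ` {..<n}) = UNIV"
        unfolding im P.linear_span_image[OF f(2)] ga(3) using f(1) by (simp add: bij_def)
    qed
    moreover have "mB (f a) (lpow mB (f a) (n - 1)) =
        (\<Sum>i = k..n. scB (\<alpha> i) (lpow mB (f a) (i - 1)))"
      unfolding lp f(3)[symmetric] assms(11)
      by (simp add: P.linear_sum[OF f(2)] P.linear_scale[OF f(2)])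
    ultimately show "\<exists>b. cyclic_generator scB mB n b \<and>
         mB b (lpow mB b (n - 1)) = (\<Sum>i = k..n. scB (\<alpha> i) (lpow mB b (i - 1)))" by blast
  next
    assume "\<exists>b. cyclic_generator scB mB n b \<and>
         mB b (lpow mB b (n - 1)) = (\<Sum>i = k..n. scB (\<alpha> i) (lpow mB b (i - 1)))"
    then obtain b where gb0: "cyclic_generator scB mB n b"
      and relb: "mB b (lpow mB b (n - 1)) = (\<Sum>i = k..n. scB (\<alpha> i) (lpow mB b (i - 1)))"
      by blast
    have gb: "inj_on (lpow mB b) {..<n}" "\<not> P.vs2.dependent (lpow mB b ` {..<n})"
      "P.vs2.span (lpow mB b ` {..<n}) = UNIV"
      using gb0 unfolding cyclic_generator_def by auto
    define BA where "BA = lpow mA a ` {..<n}"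
    define BB where "BB = lpow mB b ` {..<n}"
    define f where "f = P.construct BA (\<lambda>v. lpow mB b (inv_into {..<n} (lpow mA a) v))"
    define g where "g = Q.construct BB (\<lambda>v. lpow mA a (inv_into {..<n} (lpow mB b) v))"
    have fl: "Vector_Spaces.linear scA scB f"
      unfolding f_def by (rule P.linear_construct) (use ga in \<open>simp add: BA_def\<close>)
    have gl: "Vector_Spaces.linear scB scA g"
      unfolding g_def by (rule Q.linear_construct) (use gb in \<open>simp add: BB_def\<close>)
    have fA: "\<And>i. i < n \<Longrightarrow> f (lpow mA a i) = lpow mB b i"
      unfolding f_def using ga(1,2)
      by (subst P.construct_basis) (auto simp: BA_def)
    have gB: "\<And>i. i < n \<Longrightarrow> g (lpow mB b i) = lpow mA a i"
      unfolding g_def using gb(1,2)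
      by (subst Q.construct_basis) (auto simp: BB_def)
    have gf: "\<And>x. g (f x) = x"
    proof -
      fix x
      have "(g \<circ> f) x = id x"
      proof (rule AA.linear_eq_on[of "g \<circ> f" id x BA])
        show "Vector_Spaces.linear scA scA (g \<circ> f)" by (rule Vector_Spaces.linear_compose[OF fl gl])
        show "Vector_Spaces.linear scA scA id" by (rule vector_space.linear_id[OF vsA])
        show "x \<in> P.vs1.span BA" using ga(3) by (simp add: BA_def)
      next
        fix v assume "v \<in> BA"
        then show "(g \<circ> f) v = id v" by (auto simp: BA_def fA gB)
      qed
      then show "g (f x) = x" by simp
    qed
    have fg: "\<And>x. f (g x) = x"
    proof -
      fix x
      have "(f \<circ> g) x = id x"
      proof (rule BB.linear_eq_on[of "f \<circ> g" id x BB])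
        show "Vector_Spaces.linear scB scB (f \<circ> g)" by (rule Vector_Spaces.linear_compose[OF gl fl])
        show "Vector_Spaces.linear scB scB id" by (rule vector_space.linear_id[OF vsB])
        show "x \<in> P.vs2.span BB" using gb(3) by (simp add: BB_def)
      next
        fix v assume "v \<in> BB"
        then show "(f \<circ> g) v = id v" by (auto simp: BB_def fA gB)
      qed
      then show "f (g x) = x" by simp
    qed
    have bijf: "bij f" by (metis bijI' fg gf)
    have key: "\<And>y. f (mA a y) = mB b (f y)"
    proof -
      fix y
      have l1: "Vector_Spaces.linear scA scB (\<lambda>y. f (mA a y))"
        using Vector_Spaces.linear_compose[OF linA fl] by (simp add: o_def)
      have l2: "Vector_Spaces.linear scA scB (\<lambda>y. mB b (f y))"
        using Vector_Spaces.linear_compose[OF fl linB] by (simp add: o_def)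
      show "f (mA a y) = mB b (f y)"
      proof (rule P.linear_eq_on[OF l1 l2, of y BA])
        show "y \<in> P.vs1.span BA" using ga(3) by (simp add: BA_def)
      next
        fix v assume "v \<in> BA"
        then obtain j where j: "j < n" "v = lpow mA a j" by (auto simp: BA_def)
        show "f (mA a v) = mB b (f v)"
        proof (cases "Suc j < n")
          case True
          then show ?thesis using j fA[of "Suc j"] fA[of j] by simp
        next
          case False
          then have jn: "j = n - 1" using j by simp
          have "f (mA a v) = (\<Sum>i = k..n. scB (\<alpha> i) (f (lpow mA a (i - 1))))"
            unfolding j jn assms(11)
            by (simp add: P.linear_sum[OF fl] P.linear_scale[OF fl])
          also have "\<dots> = (\<Sum>i = k..n. scB (\<alpha> i) (lpow mB b (i - 1)))"
            using assms(2,3) by (intro sum.cong refl) (subst fA, auto)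
          also have "\<dots> = mB b (f v)" unfolding relb[symmetric] j jn
            using fA[of "n - 1"] assms(1) by simp
          finally show ?thesis .
        qed
      qed
    qed
    have mult: "\<And>x y. f (mA x y) = mB (f x) (f y)"
    proof -
      fix x y
      have l1: "Vector_Spaces.linear scA scB (\<lambda>x. f (mA x y))"
        using Vector_Spaces.linear_compose[OF linA' fl] by (simp add: o_def)
      have l2: "Vector_Spaces.linear scA scB (\<lambda>x. mB (f x) (f y))"
        using Vector_Spaces.linear_compose[OF fl linB'] by (simp add: o_def)
      show "f (mA x y) = mB (f x) (f y)"
      proof (rule P.linear_eq_on[OF l1 l2, of x BA])
        show "x \<in> P.vs1.span BA" using ga(3) by (simp add: BA_def)
      next
        fix v assume "v \<in> BA"
        then obtain j where j: "j < n" "v = lpow mA a j" by (auto simp: BA_def)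
        show "f (mA v y) = mB (f v) (f y)"
        proof (cases j)
          case 0
          then show ?thesis using j fA[of 0] key by simp
        next
          case (Suc i)
          then show ?thesis using j fA[of j]
            leib_zero_left[OF assms(4), of a i y] leib_zero_left[OF assms(7), of b i "f y"]
            P.linear_0[OF fl] by simp
        qed
      qed
    qed
    show "algebra_iso scA mA scB mB"
      unfolding algebra_iso_def using bijf fl mult by blast
  qed
qed

end
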